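(* Consider the GBDF4 coefficients $(a_0,\dots,a_3)=\big(\tfrac{2\beta^3+9\beta^2+11\beta+3}{12},\tfrac{-6\beta^3-21\beta^2-9\beta+13}{12},\tfrac{6\beta^3+15\beta^2-3\beta-5}{12},\tfrac{-2\beta^3-3\beta^2+\beta+1}{12}\big)$, $(b_0,\dots,b_4)=\big(\tfrac{\beta^3+3\beta^2+2\beta}{6},\tfrac{-\beta^3-2\beta^2+\beta+2}{2},\tfrac{\beta^3+\beta^2-2\beta}{2},\tfrac{\beta-\beta^3}{6},0\big)$, $(c_0,\dots,c_3)=\big(\tfrac{\beta^3+6\beta^2+11\beta+6}{6},\tfrac{-\beta^3-5\beta^2-6\beta}{2},\tfrac{\beta^3+4\beta^2+3\beta}{2},\tfrac{-\beta^3-3\beta^2-2\beta}{6}\big)$. For $\beta\ge1$, $$\sigma_{\mathrm{F}}\ge1,\quad\sigma_{\mathrm{E}}\ge\frac{4\beta^3+18\beta^2+20\beta+3}{4(\beta^3+3\beta^2+\beta-1)},\quad\lambda_{\mathrm{I}}\le\frac{4\beta^3+6\beta^2-4\beta-3}{4(\beta^3+3\beta^2+\beta-1)},$$ so that $\mathfrak{I}_{\mathrm{IE}}\le\dfrac{4\beta^3+6\beta^2-4\beta-3}{4\beta^3+18\beta^2+20\beta+3}$. If $\beta=9$, then $\sigma_{\mathrm{F}}\le\frac{49}{45}$, $\sigma_{\mathrm{E}}\le\frac{2319}{1960}$, $\lambda_{\mathrm{I}}\ge\frac{1641}{1960}$, so that $\mathfrak{I}_{\mathrm{IE}}\ge\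frac{547}{773}$.
   Context: For coefficient vectors $(a_j)_{j=0}^{\mathrm{k}-1}$, $(b_j)_{j=0}^{\mathrm{k}}$, $(c_j)_{j=0}^{\mathrm{k}-1}$ define $a(\theta)=\sum_j a_je^{\imath j\theta}$, $b(\theta)=\sum_j b_je^{\imath j\theta}$, $c(\theta)=\sum_jc_je^{\imath j\theta}$ and $\sigma_{\mathrm{F}}=\max_{\theta\in[0,2\pi)}|1/a(\theta)|$, $\sigma_{\mathrm{E}}=\max_{\theta\in[0,2\pi)}|c(\theta)/a(\theta)|$, $\lambda_{\mathrm{I}}=\min_{\theta\in[0,2\pi)}\Re[b(\theta)/a(\theta)]$, $\mathfrak{I}_{\mathrm{IE}}=\lambda_{\mathrm{I}}/\sigma_{\mathrm{E}}$. Here $\mathrm{k}=4$. *)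

theory Defs
  imports "HOL-Analysis.Analysis"
begin

definition trig_poly :: "real list \<Rightarrow> real \<Rightarrow> complex" where
  "trig_poly cs \<theta> = (\<Sum>j<length cs. complex_of_real (cs ! j) * exp (\<i> * of_nat j * of_real \<theta>))"

definition sigma_F :: "real list \<Rightarrow> real" where
  "sigma_F a = (SUP \<theta>\<in>{0..<2*pi}. cmod (1 / trig_poly a \<theta>))"

definition sigma_E :: "real list \<Rightarrow> real list \<Rightarrow> real" where
  "sigma_E a c = (SUP \<theta>\<in>{0..<2*pi}. cmod (trig_poly c \<theta> / trig_poly a \<theta>))"

definition lambda_I :: "real list \<Rightarrow> real list \<Rightarrow> real" where
  "lambda_I a b = (INF \<theta>\<in>{0..<2*pi}. Re (trig_poly b \<theta> / trig_poly a \<theta>))"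

definition I_IE :: "real list \<Rightarrow> real list \<Rightarrow> real list \<Rightarrow> real" where
  "I_IE a b c = lambda_I a b / sigma_E a c"

definition gbdf4_a :: "real \<Rightarrow> real list" where
  "gbdf4_a \<beta> = [(2*\<beta>^3 + 9*\<beta>^2 + 11*\<beta> + 3)/12,
                 (-6*\<beta>^3 - 21*\<beta>^2 - 9*\<beta> + 13)/12,
                 (6*\<beta>^3 + 15*\<beta>^2 - 3*\<beta> - 5)/12,
                 (-2*\<beta>^3 - 3*\<beta>^2 + \<beta> + 1)/12]"

definition gbdf4_b :: "real \<Rightarrow> real list" where
  "gbdf4_b \<beta> = [(\<beta>^3 + 3*\<beta>^2 + 2*\<beta>)/6,
                 (-(\<beta>^3) - 2*\<beta>^2 + \<beta> + 2)/2,
                 (\<beta>^3 + \<beta>^2 - 2*\<beta>)/2,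
                 (\<beta> - \<beta>^3)/6,
                 0]"

definition gbdf4_c :: "real \<Rightarrow> real list" where
  "gbdf4_c \<beta> = [(\<beta>^3 + 6*\<beta>^2 + 11*\<beta> + 6)/6,
                 (-(\<beta>^3) - 5*\<beta>^2 - 6*\<beta>)/2,
                 (\<beta>^3 + 4*\<beta>^2 + 3*\<beta>)/2,
                 (-(\<beta>^3) - 3*\<beta>^2 - 2*\<beta>)/6]"

end

theory Submission imports Defs begin

lemma sin3: "sin (x * 3) = sin x * (4 * (cos x)^2 - (1::real))"
proof -
  have "sin (x*3) = sin (2*x + x)" by (simp add: algebra_simps)
  also have "\<dots> = sin x * (4 * (cos x)^2 - 1)"
    unfolding sin_add sin_double cos_double using sin_cos_squared_add[of x]
    by algebra
  finally show ?thesis .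
qed
lemma cos3: "cos (x * 3) = 4 * (cos x)^3 - 3 * cos (x::real)"
  using cos_treble_cos[of x] by (simp add: mult.commute)
lemma cos2: "cos (x * 2) = 2 * (cos x)^2 - (1::real)"
  using cos_double_cos[of x] by (simp add: mult.commute)
lemma sin2: "sin (x * 2) = 2 * sin x * cos (x::real)"
  using sin_double[of x] by (simp add: mult.commute)

lemma tp4': "trig_poly [a0,a1,a2,a3] t = Complex
   (a0 + a1 * cos t + a2 * (2 * (cos t)^2 - 1) + a3 * (4 * (cos t)^3 - 3 * cos t))
   (sin t * (a1 + 2 * a2 * cos t + a3 * (4 * (cos t)^2 - 1)))"
  unfolding trig_poly_def
  by (simp add: numeral_eq_Suc complex_eq_iff Re_exp Im_exp cos2 sin2 cos3 sin3 algebra_simps)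

lemma tp5': "trig_poly [a0,a1,a2,a3,0] t = Complex
   (a0 + a1 * cos t + a2 * (2 * (cos t)^2 - 1) + a3 * (4 * (cos t)^3 - 3 * cos t))
   (sin t * (a1 + 2 * a2 * cos t + a3 * (4 * (cos t)^2 - 1)))"
  unfolding trig_poly_def
  by (simp add: numeral_eq_Suc complex_eq_iff Re_exp Im_exp cos2 sin2 cos3 sin3 algebra_simps)
definition RP :: "real list \<Rightarrow> real \<Rightarrow> real" where
 "RP l c = l!0 + l!1*c + l!2*(2*c^2-1) + l!3*(4*c^3-3*c)"
definition IP :: "real list \<Rightarrow> real \<Rightarrow> real" where
 "IP l c = l!1 + 2*l!2*c + l!3*(4*c^2-1)"
definition qf :: "real \<Rightarrow> real" where
 "qf b = (b^4+4*b^3+3*b^2-2*b-4/3)/3"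
definition p3f :: "real \<Rightarrow> real" where
 "p3f b = (4*b^6+24*b^5+47*b^4+28*b^3-11*b^2-14*b-3)/18"


lemma AAform: "(RP (gbdf4_a b) c)^2 + (1-c^2)*(IP (gbdf4_a b) c)^2
   = 1 + (1-c)/6 - qf b * (1-c)^2 + p3f b * (1-c)^3"
  unfolding RP_def IP_def gbdf4_a_def qf_def p3f_def
  by (simp add: field_simps) algebra

lemma E1: "(RP (gbdf4_a 9) c)^2 + (1-c^2)*(IP (gbdf4_a 9) c)^2
   = 2025/2401 + (((1-c) - 1/100)^2 * (1290233/6 * (1-c) + 960499/900) + 1297/180000 * (1-c) + 1077841901/21609000000)"
  unfolding RP_def IP_def gbdf4_a_def
  by (simp add: field_simps) algebra

lemma E2: "(2319/1960)^2 * ((RP (gbdf4_a 9) c)^2 + (1-c^2)*(IP (gbdf4_a 9) c)^2)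
   - ((RP (gbdf4_c 9) c)^2 + (1-c^2)*(IP (gbdf4_c 9) c)^2)
   = ((1-c) - 9/250)^2 * (11664803253/1097600 * (1-c) + 190744365439/960400000) + 364890398853/480200000000 * (1-c) + 8552222024441/60025000000000"
  unfolding RP_def IP_def gbdf4_a_def gbdf4_c_def
  by (simp add: field_simps) algebra

lemma E3: "RP (gbdf4_b 9) c * RP (gbdf4_a 9) c + (1-c^2)*(IP (gbdf4_b 9) c * IP (gbdf4_a 9) c)
   - 1641/1960 * ((RP (gbdf4_a 9) c)^2 + (1-c^2)*(IP (gbdf4_a 9) c)^2)
   = ((1-c) - 7/200)^2 * (2533907/560 * (1-c) + 102527129/1176000) + 119329309/470400000 * (1-c) + 2632170679/47040000000"
  unfolding RP_def IP_def gbdf4_a_def gbdf4_b_def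
  by (simp add: field_simps) algebra

lemma D1: "(b::real) \<ge> 1 \<Longrightarrow> 5 * qf b * b^2 / 9 \<le> p3f b"
proof -
  assume "b \<ge> 1"
  then obtain t where t: "t \<ge> 0" "b = 1 + t" by (metis add.commute diff_add_cancel diff_ge_0_iff_ge)
  have "p3f b - 5 * qf b * b^2 / 9 = 535/162 + 1270/81*t + 3925/162*t^2 + 454/27*t^3 + 301/54*t^4 + 22/27*t^5 + 1/27*t^6"
    unfolding qf_def p3f_def t(2) by (simp add: field_simps) algebra
  moreover have "0 \<le> 535/162 + 1270/81*t + 3925/162*t^2 + 454/27*t^3 + 301/54*t^4 + 22/27*t^5 + 1/27*t^6"
    using t(1) by (intro add_nonneg_nonneg mult_nonneg_nonneg zero_le_power) auto
  ultimately show ?thesis by linarith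
qed

lemma D2: "(b::real) \<ge> 1 \<Longrightarrow> 0 < 25 * b^4 - 12 * qf b"
proof -
  assume "b \<ge> 1"
  then obtain t where t: "t \<ge> 0" "b = 1 + t" by (metis add.commute diff_add_cancel diff_ge_0_iff_ge)
  have "25 * b^4 - 12 * qf b = 19/3 + 20*t + 66*t^2 + 68*t^3 + 21*t^4"
    unfolding qf_def t(2) by (simp add: field_simps) algebra
  moreover have "0 \<le> 20*t + 66*t^2 + 68*t^3 + 21*t^4"
    using t(1) by (intro add_nonneg_nonneg mult_nonneg_nonneg zero_le_power) auto
  ultimately show ?thesis by linarith
qed

lemma qf_nonneg: "(b::real) \<ge> 1 \<Longrightarrow> 0 \<le> qf b"
proof -
  assume "b \<ge> 1"
  then obtain t where t: "t \<ge> 0" "b = 1 + t" by (metis add.commute diff_add_cancel diff_ge_0_iff_ge)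
  have "3 * qf b = 14/3 + 20*t + 21*t^2 + 8*t^3 + t^4"
    unfolding qf_def t(2) by (simp add: field_simps) algebra
  moreover have "0 \<le> 20*t + 21*t^2 + 8*t^3 + t^4"
    using t(1) by (intro add_nonneg_nonneg mult_nonneg_nonneg zero_le_power) auto
  ultimately show ?thesis by linarith
qed

lemma AApos:
  assumes b: "(b::real) \<ge> 1" and y: "y \<ge> 0"
  shows "(25 * b^4 - 12 * qf b) / (25 * b^4) \<le> 1 + y/6 - qf b * y^2 + p3f b * y^3"
proof -
  define sv where "sv = 6 / (5 * b^2)"
  have bpos: "b > 0" using b by simp
  have sv: "sv > 0" unfolding sv_def using bpos by simp
  have e1: "2*y^3/(3* sv) + sv^2/3 - y^2 = (y-sv)^2*(2*y+sv)/(3* sv)"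
    using sv by (simp add: field_simps) algebra
  have "(y-sv)^2*(2*y+sv)/(3* sv) \<ge> 0" using sv y by simp
  hence h1: "y^2 \<le> 2*y^3/(3* sv) + sv^2/3" using e1 by linarith
  have q: "qf b \<ge> 0" using qf_nonneg b .
  have h3: "qf b * y^2 \<le> qf b * (2*y^3/(3* sv) + sv^2/3)"
    using mult_left_mono[OF h1 q] .
  have e4: "qf b * (2*y^3/(3* sv) + sv^2/3) = y^3 * (5 * qf b * b^2 / 9) + qf b * sv^2 / 3"
    unfolding sv_def using bpos by (simp add: field_simps power2_eq_square eval_nat_numeral)
  have h5: "y^3 * (5 * qf b * b^2 / 9) \<le> y^3 * p3f b"
    using mult_left_mono[OF D1[OF b], of "y^3"] y by simp
  have e6: "1 - qf b * sv^2 / 3 = (25 * b^4 - 12 * qf b) / (25 * b^4)"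
    unfolding sv_def using bpos by (simp add: field_simps power2_eq_square eval_nat_numeral)
  have "0 \<le> y/6" using y by simp
  show ?thesis using h3 e4 h5 e6 \<open>0 \<le> y/6\<close> by (simp add: mult.commute)
qed

lemma tp4: "trig_poly [a0,a1,a2,a3] t = Complex (RP [a0,a1,a2,a3] (cos t)) (sin t * IP [a0,a1,a2,a3] (cos t))"
  unfolding tp4' RP_def IP_def by simp
lemma tp5: "trig_poly [a0,a1,a2,a3,0] t = Complex (RP [a0,a1,a2,a3,0] (cos t)) (sin t * IP [a0,a1,a2,a3,0] (cos t))"
  unfolding tp5' RP_def IP_def by simp

lemma tpA: "trig_poly (gbdf4_a b) t = Complex (RP (gbdf4_a b) (cos t)) (sin t * IP (gbdf4_a b) (cos t))"
  unfolding gbdf4_a_def by (rule tp4)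
lemma tpB: "trig_poly (gbdf4_b b) t = Complex (RP (gbdf4_b b) (cos t)) (sin t * IP (gbdf4_b b) (cos t))"
  unfolding gbdf4_b_def by (rule tp5)
lemma tpC: "trig_poly (gbdf4_c b) t = Complex (RP (gbdf4_c b) (cos t)) (sin t * IP (gbdf4_c b) (cos t))"
  unfolding gbdf4_c_def by (rule tp4)

lemma nsq: "(cmod (Complex x (sin t * y)))^2 = x^2 + (1 - (cos t)^2) * y^2"
  by (simp add: cmod_power2 sin_squared_eq power_mult_distrib)

lemma redot: "Re (Complex x1 (sin t * y1) / Complex x2 (sin t * y2))
   = (x1*x2 + (1-(cos t)^2)*(y1*y2)) / (cmod (Complex x2 (sin t * y2)))^2"
proof -
  have h: "1 - (cos t)^2 = sin t * sin t" using sin_squared_eq[of t] by (simp add: power2_eq_square)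
  show ?thesis unfolding h Re_divide' by (simp add: algebra_simps)
qed

lemma tp_norm: "cmod (trig_poly l t) \<le> (\<Sum>j<length l. \<bar>l!j\<bar>)"
  unfolding trig_poly_def
  by (rule order_trans[OF norm_sum]) (simp add: norm_mult norm_exp_eq_Re)

definition mb :: "real \<Rightarrow> real" where
  "mb b = sqrt ((25 * b^4 - 12 * qf b) / (25 * b^4))"

lemma mb_pos: "(b::real) \<ge> 1 \<Longrightarrow> 0 < mb b"
  unfolding mb_def using D2[of b] by simp

lemma alow: assumes b: "(b::real) \<ge> 1" shows "mb b \<le> cmod (trig_poly (gbdf4_a b) t)"
proof -
  have "(cmod (trig_poly (gbdf4_a b) t))^2 = (RP (gbdf4_a b) (cos t))^2 + (1 - (cos t)^2) * (IP (gbdf4_a b) (cos t))^2"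
    unfolding tpA nsq ..
  also have "\<dots> = 1 + (1 - cos t)/6 - qf b * (1 - cos t)^2 + p3f b * (1 - cos t)^3"
    by (rule AAform)
  finally have e: "(cmod (trig_poly (gbdf4_a b) t))^2 = 1 + (1 - cos t)/6 - qf b * (1 - cos t)^2 + p3f b * (1 - cos t)^3" .
  have "(25 * b^4 - 12 * qf b) / (25 * b^4) \<le> (cmod (trig_poly (gbdf4_a b) t))^2"
    unfolding e by (rule AApos[OF b]) simp
  hence "mb b \<le> sqrt ((cmod (trig_poly (gbdf4_a b) t))^2)"
    unfolding mb_def by (rule real_sqrt_le_mono)
  thus ?thesis by simp
qed

lemma quot_bound: "0 < m \<Longrightarrow> m \<le> cmod z \<Longrightarrow> cmod w \<le> K \<Longrightarrow> cmod (w / z) \<le> K / m"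
  unfolding norm_divide by (rule frac_le) (auto intro: order_trans[OF norm_ge_zero])

lemma cert: "0 \<le> (y::real) \<Longrightarrow> 0 \<le> k \<Longrightarrow> 0 \<le> e \<Longrightarrow> 0 \<le> f \<Longrightarrow> 0 \<le> g \<Longrightarrow> 0 \<le> (y - r)^2 * (k*y + e) + f*y + g"
  by (intro add_nonneg_nonneg mult_nonneg_nonneg) auto

lemma RPA1: "RP (gbdf4_a b) 1 = 1"
  unfolding RP_def gbdf4_a_def by (simp add: field_simps)
lemma RPAm1: "RP (gbdf4_a b) (-1) = 4*(b^3+3*b^2+b-1)/3"
  unfolding RP_def gbdf4_a_def by (simp add: field_simps)
lemma RPBm1: "RP (gbdf4_b b) (-1) = (4*b^3+6*b^2-4*b-3)/3"
  unfolding RP_def gbdf4_b_def by (simp add: field_simps)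
lemma RPCm1: "RP (gbdf4_c b) (-1) = (4*b^3+18*b^2+20*b+3)/3"
  unfolding RP_def gbdf4_c_def by (simp add: field_simps)

lemma general:
  fixes b :: real
  assumes b: "b \<ge> 1"
  shows "sigma_F (gbdf4_a b) \<ge> 1
          \<and> sigma_E (gbdf4_a b) (gbdf4_c b) \<ge>
              (4*b^3 + 18*b^2 + 20*b + 3) / (4*(b^3 + 3*b^2 + b - 1))
          \<and> lambda_I (gbdf4_a b) (gbdf4_b b) \<le>
              (4*b^3 + 6*b^2 - 4*b - 3) / (4*(b^3 + 3*b^2 + b - 1))
          \<and> I_IE (gbdf4_a b) (gbdf4_b b) (gbdf4_c b) \<le>
              (4*b^3 + 6*b^2 - 4*b - 3) / (4*b^3 + 18*b^2 + 20*b + 3)"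
proof -
  let ?S = "{0..<2*pi}"
  let ?A = "gbdf4_a b" and ?B = "gbdf4_b b" and ?C = "gbdf4_c b"
  have m: "0 < mb b" using mb_pos[OF b] .
  have bddF: "bdd_above ((\<lambda>t. cmod (1 / trig_poly ?A t)) ` ?S)"
    by (rule bdd_aboveI2[where M="1 / mb b"], rule quot_bound[OF m alow[OF b]]) simp
  have bddE: "bdd_above ((\<lambda>t. cmod (trig_poly ?C t / trig_poly ?A t)) ` ?S)"
    by (rule bdd_aboveI2, rule quot_bound[OF m alow[OF b] tp_norm])
  have bddI: "bdd_below ((\<lambda>t. Re (trig_poly ?B t / trig_poly ?A t)) ` ?S)"
  proof (rule bdd_belowI2)
    fix t
    have "cmod (trig_poly ?B t / trig_poly ?A t) \<le> (\<Sum>j<length ?B. \<bar>?B!j\<bar>) / mb b"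
      by (rule quot_bound[OF m alow[OF b] tp_norm])
    moreover have "- cmod (trig_poly ?B t / trig_poly ?A t) \<le> Re (trig_poly ?B t / trig_poly ?A t)"
      using abs_Re_le_cmod[of "trig_poly ?B t / trig_poly ?A t"] by linarith
    ultimately show "- ((\<Sum>j<length ?B. \<bar>?B!j\<bar>) / mb b) \<le> Re (trig_poly ?B t / trig_poly ?A t)"
      by linarith
  qed
  have zS: "0 \<in> ?S" by simp
  have piS: "pi \<in> ?S" using pi_gt_zero by simp
  have b2: "b \<le> b^2" "b^2 \<le> b^3" using b power_increasing[of 1 2 b] power_increasing[of 2 3 b] by simp_all
  have D: "0 < b^3 + 3*b^2 + b - 1" using b b2 by linarith
  have N1: "0 < 4*b^3 + 6*b^2 - 4*b - 3" using b b2 by linarith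
  have N2: "0 < 4*b^3 + 18*b^2 + 20*b + 3" using b b2 by linarith
  have a0: "trig_poly ?A 0 = 1" by (simp add: complex_eq_iff tpA RPA1)
  have pa: "trig_poly ?A pi = of_real (4*(b^3+3*b^2+b-1)/3)" by (simp add: complex_eq_iff tpA RPAm1)
  have pb: "trig_poly ?B pi = of_real ((4*b^3+6*b^2-4*b-3)/3)" by (simp add: complex_eq_iff tpB RPBm1)
  have pc: "trig_poly ?C pi = of_real ((4*b^3+18*b^2+20*b+3)/3)" by (simp add: complex_eq_iff tpC RPCm1)
  define Sv where "Sv = (4*b^3 + 18*b^2 + 20*b + 3) / (4*(b^3 + 3*b^2 + b - 1))"
  define Lv where "Lv = (4*b^3 + 6*b^2 - 4*b - 3) / (4*(b^3 + 3*b^2 + b - 1))"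
  have Sv0: "0 < Sv" unfolding Sv_def using D N2 by simp
  have Lv0: "0 < Lv" unfolding Lv_def using D N1 by simp
  have vE: "cmod (trig_poly ?C pi / trig_poly ?A pi) = Sv"
  proof -
    have "cmod (trig_poly ?C pi / trig_poly ?A pi) = \<bar>((4*b^3+18*b^2+20*b+3)/3) / (4*(b^3+3*b^2+b-1)/3)\<bar>"
      unfolding pa pc of_real_divide[symmetric] norm_of_real ..
    also have "\<dots> = Sv" unfolding Sv_def using D N2 by (simp add: field_simps)
    finally show ?thesis .
  qed
  have vI: "Re (trig_poly ?B pi / trig_poly ?A pi) = Lv"
  proof -
    have "Re (trig_poly ?B pi / trig_poly ?A pi) = ((4*b^3+6*b^2-4*b-3)/3) / (4*(b^3+3*b^2+b-1)/3)"
      unfolding pa pb of_real_divide[symmetric] Re_complex_of_real ..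
    also have "\<dots> = Lv" unfolding Lv_def using D by (simp add: field_simps)
    finally show ?thesis .
  qed
  have F: "sigma_F ?A \<ge> 1"
    using cSUP_upper[OF zS bddF] unfolding sigma_F_def a0 by simp
  have E: "sigma_E ?A ?C \<ge> Sv"
    using cSUP_upper[OF piS bddE] unfolding sigma_E_def vE by simp
  have I: "lambda_I ?A ?B \<le> Lv"
    using cINF_lower[OF bddI piS] unfolding lambda_I_def vI by simp
  have Q: "Lv / Sv = (4*b^3 + 6*b^2 - 4*b - 3) / (4*b^3 + 18*b^2 + 20*b + 3)"
  proof -
    have dd: "(x/z)/(y/z) = x/y" if "z \<noteq> 0" for x y z :: real
      using that by (cases "y = 0") (simp_all add: field_simps)
    show ?thesis unfolding Lv_def Sv_def using D by (intro dd) simp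
  qed
  have IE: "I_IE ?A ?B ?C \<le> Lv / Sv"
  proof (cases "lambda_I ?A ?B \<le> 0")
    case True
    have "lambda_I ?A ?B / sigma_E ?A ?C \<le> 0"
      using True E Sv0 by (simp add: divide_nonpos_pos)
    also have "0 \<le> Lv / Sv" using Lv0 Sv0 by simp
    finally show ?thesis unfolding I_IE_def .
  next
    case False
    hence "lambda_I ?A ?B / sigma_E ?A ?C \<le> Lv / Sv"
      using I E Sv0 by (intro frac_le) auto
    thus ?thesis unfolding I_IE_def .
  qed
  show ?thesis unfolding Q[symmetric] Sv_def[symmetric] Lv_def[symmetric] using F E I IE by blast
qed

lemma nine:
  shows "sigma_F (gbdf4_a 9) \<le> 49/45
          \<and> sigma_E (gbdf4_a 9) (gbdf4_c 9) \<le> 2319/1960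
          \<and> lambda_I (gbdf4_a 9) (gbdf4_b 9) \<ge> 1641/1960
          \<and> I_IE (gbdf4_a 9) (gbdf4_b 9) (gbdf4_c 9) \<ge> 547/773"
proof -
  let ?S = "{0..<2*pi}"
  let ?A = "gbdf4_a 9" and ?B = "gbdf4_b 9" and ?C = "gbdf4_c 9"
  have ne: "?S \<noteq> {}" using pi_gt_zero by simp
  have asq: "(cmod (trig_poly ?A t))^2 = (RP ?A (cos t))^2 + (1 - (cos t)^2) * (IP ?A (cos t))^2" for t :: real
    unfolding tpA nsq ..
  have csq: "(cmod (trig_poly ?C t))^2 = (RP ?C (cos t))^2 + (1 - (cos t)^2) * (IP ?C (cos t))^2" for t :: real
    unfolding tpC nsq ..
  have y: "0 \<le> 1 - cos t" for t :: real using cos_le_one[of t] by linarith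
  have alo: "45/49 \<le> cmod (trig_poly ?A t)" for t :: real
  proof -
    have n45: "(45/49::real)^2 = 2025/2401" by (simp add: power2_eq_square)
    have "(45/49)^2 \<le> (cmod (trig_poly ?A t))^2"
      unfolding asq E1 using cert[OF y[of t], of "1290233/6" "960499/900" "1297/180000" "1077841901/21609000000" "1/100"]
        n45 by linarith
    thus ?thesis by (rule power2_le_imp_le) simp
  qed
  have apos: "0 < cmod (trig_poly ?A t)" for t using alo[of t] by linarith
  have F: "cmod (1 / trig_poly ?A t) \<le> 49/45" for t :: real
    using quot_bound[of "45/49" "trig_poly ?A t" 1 1] alo[of t] by simp
  have Eb: "cmod (trig_poly ?C t / trig_poly ?A t) \<le> 2319/1960" for t :: real
  proof -
    have "(cmod (trig_poly ?C t))^2 \<le> (2319/1960 * cmod (trig_poly ?A t))^2"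
      using E2[of "cos t"] cert[OF y[of t], of "11664803253/1097600" "190744365439/960400000" "364890398853/480200000000" "8552222024441/60025000000000" "9/250"]
      unfolding power_mult_distrib asq csq by linarith
    hence "cmod (trig_poly ?C t) \<le> 2319/1960 * cmod (trig_poly ?A t)"
      by (rule power2_le_imp_le) simp
    thus ?thesis unfolding norm_divide using apos[of t] by (simp add: pos_divide_le_eq)
  qed
  have Ib: "1641/1960 \<le> Re (trig_poly ?B t / trig_poly ?A t)" for t :: real
  proof -
    have r: "Re (trig_poly ?B t / trig_poly ?A t) = (RP ?B (cos t) * RP ?A (cos t) + (1 - (cos t)^2) * (IP ?B (cos t) * IP ?A (cos t))) / (cmod (trig_poly ?A t))^2"
      unfolding tpA tpB redot ..
    have "1641/1960 * (cmod (trig_poly ?A t))^2 \<le> RP ?B (cos t) * RP ?A (cos t) + (1 - (cos t)^2) * (IP ?B (cos t) * IP ?A (cos t))"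
      using E3[of "cos t"] cert[OF y[of t], of "2533907/560" "102527129/1176000" "119329309/470400000" "2632170679/47040000000" "7/200"]
      unfolding asq by linarith
    thus ?thesis unfolding r using apos[of t] by (simp add: pos_le_divide_eq)
  qed
  have sF: "sigma_F ?A \<le> 49/45" unfolding sigma_F_def by (rule cSUP_least[OF ne]) (rule F)
  have sE: "sigma_E ?A ?C \<le> 2319/1960" unfolding sigma_E_def by (rule cSUP_least[OF ne]) (rule Eb)
  have lI: "lambda_I ?A ?B \<ge> 1641/1960" unfolding lambda_I_def by (rule cINF_greatest[OF ne]) (rule Ib)
  have sE0: "sigma_E ?A ?C > 0"
  proof -
    have "sigma_E ?A ?C \<ge> (4*9^3 + 18*9^2 + 20*9 + 3) / (4*(9^3 + 3*9^2 + 9 - 1))"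
      using general[of 9] by simp
    thus ?thesis by simp
  qed
  have "(1641/1960) / (2319/1960) \<le> lambda_I ?A ?B / sigma_E ?A ?C"
    using lI sE sE0 by (intro frac_le) auto
  hence IE: "547/773 \<le> I_IE ?A ?B ?C" unfolding I_IE_def by simp
  show ?thesis using sF sE lI IE by simp
qed

theorem mainTheorem8:
  shows "(\<forall>\<beta>::real. \<beta> \<ge> 1 \<longrightarrow>
            sigma_F (gbdf4_a \<beta>) \<ge> 1
          \<and> sigma_E (gbdf4_a \<beta>) (gbdf4_c \<beta>) \<ge>
              (4*\<beta>^3 + 18*\<beta>^2 + 20*\<beta> + 3) / (4*(\<beta>^3 + 3*\<beta>^2 + \<beta> - 1))
          \<and> lambda_I (gbdf4_a \<beta>) (gbdf4_b \<beta>) \<le>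
              (4*\<beta>^3 + 6*\<beta>^2 - 4*\<beta> - 3) / (4*(\<beta>^3 + 3*\<beta>^2 + \<beta> - 1))
          \<and> I_IE (gbdf4_a \<beta>) (gbdf4_b \<beta>) (gbdf4_c \<beta>) \<le>
              (4*\<beta>^3 + 6*\<beta>^2 - 4*\<beta> - 3) / (4*\<beta>^3 + 18*\<beta>^2 + 20*\<beta> + 3))
       \<and> (sigma_F (gbdf4_a 9) \<le> 49/45
          \<and> sigma_E (gbdf4_a 9) (gbdf4_c 9) \<le> 2319/1960
          \<and> lambda_I (gbdf4_a 9) (gbdf4_b 9) \<ge> 1641/1960
          \<and> I_IE (gbdf4_a 9) (gbdf4_b 9) (gbdf4_c 9) \<ge> 547/773)"
  using general nine by blast

end
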